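(* Let $G$ be a quadrangulation of a surface $\Sigma$, and let $B_1,\ldots,B_k$ be directed closed walks tracing the boundary cycles of $G$. If $\psi$ is a $3$-coloring of $G$, then $\sum_{i=1}^k \omega_\psi(B_i)\equiv p(G,B_1,\ldots,B_k)\pmod 4$.
   Context: A surface is a compact connected $2$-manifold with possibly empty boundary; boundary components are cuffs. $G$ is a quadrangulation of $\Sigma$ if every face of $G$ is homeomorphic to an open disk, is bounded by a cycle of $G$, and has length $4$; the boundary of $\Sigma$ is then formed by pairwise vertex-disjoint cycles of $G$, the boundary cycles. Given the directed closed walks $B_1,\ldots,B_k$ tracing the boundary cycles, choose an orientation of each facial cycle arbitrarily; every edge lies in exactly two of these oriented facial/boundary cycles. Let $D$ be the set of edges $uv$ of $G$ that are oriented towards $v$ in both of the two cycles containing them, and let $p(G,B_1,\ldots,B_k)=2|D|\bmod 4$ (this does not depend on the chosen orientations of the faces). A $3$-coloring is a proper coloring $\psi:V(G)\to\{1,2,3\}$. For an edge $uv$, $\delta_\psi(u,v)=1$ if $\psi(v)-\psi(u)\in\{1,-2\}$ and $-1$ otherwise; for a walk $W=u_1\ldots u_m$, $\delta_\psi(W)=\sum_{i=1}^{m-1}\delta_\psi(u_i,u_{i+1})$; for a closed walk $Q$, $\omega_\psi(Q)=\delta_\psi(Q)/3$. *)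

theory Defs
  imports Main "HOL.Rat"
begin

text \<open>A closed walk / cycle is a list of vertices [x0,...,x(n-1)], traversed
x0 -> x1 -> ... -> x(n-1) -> x0.\<close>

definition darts :: "'v list \<Rightarrow> ('v \<times> 'v) list" where
  "darts c = map (\<lambda>i. (c ! i, c ! (Suc i mod length c))) [0..<length c]"

definition is_cycle_in :: "'v set set \<Rightarrow> 'v list \<Rightarrow> bool" where
  "is_cycle_in E c \<longleftrightarrow> length c \<ge> 3 \<and> distinct c \<and>
     (\<forall>(u,v) \<in> set (darts c). {u,v} \<in> E)"

definition simple_graph :: "'v set \<Rightarrow> 'v set set \<Rightarrow> bool" where
  "simple_graph V E \<longleftrightarrow> finite V \<and>
     (\<forall>e\<in>E. \<exists>u v. e = {u,v} \<and> u \<noteq> v \<and> u \<in> V \<and> v \<in> V)"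

definition graph_connected :: "'v set \<Rightarrow> 'v set set \<Rightarrow> bool" where
  "graph_connected V E \<longleftrightarrow>
     (\<forall>u\<in>V. \<forall>v\<in>V. (u,v) \<in> {(a,b). {a,b} \<in> E}\<^sup>*)"

definition dart_count ::
  "'f set \<Rightarrow> ('f \<Rightarrow> 'v list) \<Rightarrow> 'v list list \<Rightarrow> 'v \<Rightarrow> 'v \<Rightarrow> nat" where
  "dart_count F face Bs u v =
     (\<Sum>f\<in>F. count_list (darts (face f)) (u,v)) +
     sum_list (map (\<lambda>B. count_list (darts B) (u,v)) Bs)"

text \<open>Corners of a closed walk c at vertex v: pairs {predecessor, successor}
of each occurrence of v.\<close>
definition corners :: "'v list \<Rightarrow> 'v \<Rightarrow> 'v set set" where
  "corners c v = {{c ! ((i + length c - 1) mod length c), c ! (Suc i mod length c)} | i.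
                   i < length c \<and> c ! i = v}"

text \<open>Link of v (faces together with the boundary walks, i.e. after capping the
boundary by discs) is connected on the neighbourhood of v: this is the manifold
condition at v.\<close>
definition link_connected ::
  "'v set set \<Rightarrow> 'f set \<Rightarrow> ('f \<Rightarrow> 'v list) \<Rightarrow> 'v list list \<Rightarrow> 'v \<Rightarrow> bool" where
  "link_connected E F face Bs v \<longleftrightarrow>
     (let N = {w. {v,w} \<in> E};
          R = (\<Union>f\<in>F. corners (face f) v) \<union> (\<Union>B\<in>set Bs. corners B v)
      in N \<noteq> {} \<and> (\<forall>w\<in>N. \<forall>w'\<in>N. (w,w') \<in> {(a,b). {a,b} \<in> R}\<^sup>*))"

text \<open>G=(V,E) with faces (face f, f in F, each given with an arbitrary orientation)
is a quadrangulation of a compact connected surface whose boundary cycles are traced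
by the directed closed walks Bs.\<close>
definition quadrangulation ::
  "'v set \<Rightarrow> 'v set set \<Rightarrow> 'f set \<Rightarrow> ('f \<Rightarrow> 'v list) \<Rightarrow> 'v list list \<Rightarrow> bool" where
  "quadrangulation V E F face Bs \<longleftrightarrow>
     simple_graph V E \<and> V \<noteq> {} \<and> graph_connected V E \<and> finite F \<and>
     (\<forall>f\<in>F. is_cycle_in E (face f) \<and> length (face f) = 4) \<and>
     (\<forall>B\<in>set Bs. is_cycle_in E B) \<and>
     (\<forall>i j. i < length Bs \<longrightarrow> j < length Bs \<longrightarrow> i \<noteq> j \<longrightarrow>
            set (Bs ! i) \<inter> set (Bs ! j) = {}) \<and>
     (\<forall>u v. {u,v} \<in> E \<longrightarrow> dart_count F face Bs u v + dart_count F face Bs v u = 2) \<and>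
     (\<forall>v\<in>V. link_connected E F face Bs v)"

text \<open>D: edges uv oriented towards v in both cycles containing them (as directed pairs).\<close>
definition D_set ::
  "'v set set \<Rightarrow> 'f set \<Rightarrow> ('f \<Rightarrow> 'v list) \<Rightarrow> 'v list list \<Rightarrow> ('v \<times> 'v) set" where
  "D_set E F face Bs = {(u,v). {u,v} \<in> E \<and> dart_count F face Bs u v = 2}"

definition p_inv ::
  "'v set set \<Rightarrow> 'f set \<Rightarrow> ('f \<Rightarrow> 'v list) \<Rightarrow> 'v list list \<Rightarrow> int" where
  "p_inv E F face Bs = (2 * int (card (D_set E F face Bs))) mod 4"

definition three_coloring :: "'v set \<Rightarrow> 'v set set \<Rightarrow> ('v \<Rightarrow> int) \<Rightarrow> bool" where
  "three_coloring V E \<psi> \<longleftrightarrow> (\<forall>v\<in>V. \<psi> v \<in> {1,2,3}) \<and>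
     (\<forall>u v. {u,v} \<in> E \<longrightarrow> \<psi> u \<noteq> \<psi> v)"

definition delta :: "('v \<Rightarrow> int) \<Rightarrow> 'v \<Rightarrow> 'v \<Rightarrow> int" where
  "delta \<psi> u v = (if \<psi> v - \<psi> u \<in> {1, -2} then 1 else -1)"

definition delta_closed :: "('v \<Rightarrow> int) \<Rightarrow> 'v list \<Rightarrow> int" where
  "delta_closed \<psi> c = sum_list (map (\<lambda>(u,v). delta \<psi> u v) (darts c))"

definition omega :: "('v \<Rightarrow> int) \<Rightarrow> 'v list \<Rightarrow> rat" where
  "omega \<psi> c = of_int (delta_closed \<psi> c) / 3"

end

theory Submission
  imports Defs
begin

lemma sum_list_count_int:
  fixes f :: "'a \<Rightarrow> int"
  assumes "set xs \<subseteq> X" "finite X"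
  shows "sum_list (map f xs) = (\<Sum>x\<in>X. int (count_list xs x) * f x)"
  using assms(1)
proof (induction xs)
  case Nil then show ?case by simp
next
  case (Cons a xs)
  have "(\<Sum>x\<in>X. int (count_list (a#xs) x) * f x)
      = (\<Sum>x\<in>X. (if x = a then f x else 0) + int (count_list xs x) * f x)"
    by (rule sum.cong) (auto simp: algebra_simps)
  also have "\<dots> = f a + (\<Sum>x\<in>X. int (count_list xs x) * f x)"
    using Cons.prems assms(2) by (simp add: sum.distrib sum.delta')
  finally show ?case using Cons by simp
qed

lemma sum_list_sum_swap:
  fixes g :: "'b \<Rightarrow> 'a \<Rightarrow> int"
  shows "sum_list (map (\<lambda>B. \<Sum>x\<in>P. g B x) Bs) = (\<Sum>x\<in>P. sum_list (map (\<lambda>B. g B x) Bs))"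
  by (induction Bs) (simp_all add: sum.distrib)

lemma sum_list_div3:
  fixes h :: "'b \<Rightarrow> int"
  shows "sum_list (map (\<lambda>B. (of_int (h B) :: rat) / 3) Bs) = of_int (sum_list (map h Bs)) / 3"
  by (induction Bs) (simp_all add: add_divide_distrib)

lemma dvd_sum_list_diff:
  fixes f g :: "'a \<Rightarrow> int"
  assumes "\<forall>d\<in>set ds. m dvd (f d - g d)"
  shows "m dvd (sum_list (map f ds) - sum_list (map g ds))"
  using assms
proof (induction ds)
  case (Cons a ds)
  then have "m dvd ((f a - g a) + (sum_list (map f ds) - sum_list (map g ds)))"
    by (simp add: dvd_add)
  then show ?case by (simp add: algebra_simps)
qed simp

lemma pm1_step:
  fixes s n x :: int
  assumes "x = 1 \<or> x = -1" "\<bar>s\<bar> \<le> n" "even (s + n)"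
  shows "\<bar>x + s\<bar> \<le> 1 + n \<and> even (x + s + (1 + n))"
  using assms by presburger

lemma pm1_sum:
  fixes f :: "'a \<Rightarrow> int"
  assumes "\<forall>d\<in>set ds. f d = 1 \<or> f d = -1"
  shows "\<bar>sum_list (map f ds)\<bar> \<le> int (length ds) \<and>
         even (sum_list (map f ds) + int (length ds))"
  using assms
proof (induction ds)
  case (Cons a ds)
  then have "f a = 1 \<or> f a = -1" by simp
  moreover have "\<bar>sum_list (map f ds)\<bar> \<le> int (length ds)" "even (sum_list (map f ds) + int (length ds))"
    using Cons by auto
  moreover have "sum_list (map f (a#ds)) = f a + sum_list (map f ds)" "int (length (a#ds)) = 1 + int (length ds)" by simp_all
  ultimately show ?case using pm1_step[of "f a" "sum_list (map f ds)" "int (length ds)"] by presburger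
qed simp

lemma darts_fst: "map fst (darts c) = c"
  unfolding darts_def by (rule nth_equalityI) auto

lemma darts_snd: "map snd (darts c) = rotate1 c"
proof (cases c)
  case Nil then show ?thesis by (simp add: darts_def)
next
  case (Cons a cs)
  show ?thesis
  proof (rule nth_equalityI)
    show "length (map snd (darts c)) = length (rotate1 c)" by (simp add: darts_def)
  next
    fix i assume "i < length (map snd (darts c))"
    then have i: "i < length c" by (simp add: darts_def)
    show "map snd (darts c) ! i = rotate1 c ! i"
    proof (cases "Suc i < length c")
      case True
      then show ?thesis using i Cons by (simp add: darts_def nth_append)
    next
      case False
      then have "Suc i = length c" using i by simp
      then show ?thesis using i Cons by (simp add: darts_def nth_append)
    qed
  qed
qed

lemma sum_rotate1: "sum_list (map (f::'a\<Rightarrow>int) (rotate1 c)) = sum_list (map f c)"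
  by (cases c) (simp_all add: algebra_simps)

lemma sub_lem: "sum_list (map (\<lambda>(u,v). (\<psi>::'v\<Rightarrow>int) v - \<psi> u) ds)
     = sum_list (map (\<psi> \<circ> snd) ds) - sum_list (map (\<psi> \<circ> fst) ds)"
  by (induction ds) auto

lemma zero_lem: "\<bar>x\<bar> \<le> 4 \<Longrightarrow> even (x+4) \<Longrightarrow> 3 dvd x \<Longrightarrow> x = (0::int)"
  by presburger

lemma closed_mod3:
  fixes \<psi> :: "'v \<Rightarrow> int"
  assumes "\<forall>(u,v)\<in>set (darts c). 3 dvd (delta \<psi> u v - (\<psi> v - \<psi> u))"
  shows "3 dvd delta_closed \<psi> c"
proof -
  have "3 dvd (sum_list (map (\<lambda>(u,v). delta \<psi> u v) (darts c)) -
               sum_list (map (\<lambda>(u,v). \<psi> v - \<psi> u) (darts c)))"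
    using assms by (intro dvd_sum_list_diff) auto
  moreover have "sum_list (map (\<lambda>(u,v). \<psi> v - \<psi> u) (darts c))
     = sum_list (map (\<psi> \<circ> snd) (darts c)) - sum_list (map (\<psi> \<circ> fst) (darts c))"
    by (rule sub_lem)
  moreover have "sum_list (map (\<psi> \<circ> snd) (darts c)) = sum_list (map \<psi> c)"
    using darts_snd[of c] sum_rotate1[of \<psi> c] by (metis map_map)
  moreover have "sum_list (map (\<psi> \<circ> fst) (darts c)) = sum_list (map \<psi> c)"
    using darts_fst[of c] by (metis map_map)
  ultimately show ?thesis by (simp add: delta_closed_def)
qed

theorem mainTheorem4:
  fixes V :: "'v set" and E :: "'v set set" and F :: "'f set"
    and face :: "'f \<Rightarrow> 'v list" and Bs :: "'v list list" and \<psi> :: "'v \<Rightarrow> int"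
  assumes "quadrangulation V E F face Bs"
    and "three_coloring V E \<psi>"
  shows "\<exists>z::int. (\<Sum>B\<leftarrow>Bs. omega \<psi> B) - of_int (p_inv E F face Bs) = 4 * of_int z"
proof -
  note Q = assms(1)[unfolded quadrangulation_def]
  note C = assms(2)[unfolded three_coloring_def]
  have sg: "simple_graph V E" using Q by simp
  have finV: "finite V" using sg by (simp add: simple_graph_def)
  have finF: "finite F" using Q by simp
  have EV: "u \<in> V \<and> v \<in> V" if "{u,v} \<in> E" for u v
  proof -
    have "\<forall>e\<in>E. \<exists>u v. e = {u,v} \<and> u \<noteq> v \<and> u \<in> V \<and> v \<in> V"
      using sg by (simp add: simple_graph_def)
    from this[rule_format, OF that]
    obtain a b where "{u,v} = {a,b}" "a \<in> V" "b \<in> V" by blast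
    then show ?thesis by (auto simp: doubleton_eq_iff)
  qed
  define P where "P = {(u,v). {u,v} \<in> E}"
  have finP: "finite P"
  proof -
    have "P \<subseteq> V \<times> V" using EV by (auto simp: P_def)
    then show ?thesis using finV finite_subset by blast
  qed
  define dl where "dl = (\<lambda>(u,v). delta \<psi> u v)"
  have col: "\<psi> u \<in> {1,2,3} \<and> \<psi> v \<in> {1,2,3} \<and> \<psi> u \<noteq> \<psi> v" if "{u,v} \<in> E" for u v
    using C EV[OF that] that by blast
  have d3: "3 dvd (delta \<psi> u v - (\<psi> v - \<psi> u))" if "{u,v} \<in> E" for u v
    using col[OF that] by (auto simp: delta_def)
  have dpm: "delta \<psi> u v = 1 \<or> delta \<psi> u v = -1" for u v
    by (simp add: delta_def)
  have danti: "delta \<psi> v u = - delta \<psi> u v" if "{u,v} \<in> E" for u v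
    using col[OF that] by (auto simp: delta_def)
  define W where "W = face ` F \<union> set Bs"
  have Wcyc: "is_cycle_in E w" if "w \<in> W" for w
    using Q that by (auto simp: W_def)
  have WP: "set (darts w) \<subseteq> P" if "w \<in> W" for w
    using Wcyc[OF that] by (auto simp: is_cycle_in_def P_def)
  have W3: "3 dvd delta_closed \<psi> w" if "w \<in> W" for w
    using Wcyc[OF that] d3 by (intro closed_mod3) (auto simp: is_cycle_in_def)
  have Wsum: "delta_closed \<psi> w = (\<Sum>x\<in>P. int (count_list (darts w) x) * dl x)" if "w \<in> W" for w
    unfolding delta_closed_def dl_def[symmetric]
    by (rule sum_list_count_int[OF WP[OF that] finP])
  have face0: "delta_closed \<psi> (face f) = 0" if "f \<in> F" for f
  proof -
    have w: "face f \<in> W" using that by (simp add: W_def)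
    have len: "length (darts (face f)) = 4" using Q that by (simp add: darts_def)
    have "\<bar>delta_closed \<psi> (face f)\<bar> \<le> 4 \<and> even (delta_closed \<psi> (face f) + 4)"
      using pm1_sum[of "darts (face f)" dl] len dpm unfolding delta_closed_def dl_def
      by (auto simp: case_prod_beta)
    moreover have "3 dvd delta_closed \<psi> (face f)" using W3[OF w] .
    ultimately show ?thesis using zero_lem by blast
  qed
  define dc where "dc = (\<lambda>(u,v). dart_count F face Bs u v)"
  define T where "T = sum_list (map (delta_closed \<psi>) Bs)"
  have T3: "3 dvd T" unfolding T_def
    by (rule dvd_sum_list_diff[where g="\<lambda>_. 0", simplified]) (auto intro: W3 simp: W_def)
  have Fz: "(\<Sum>f\<in>F. delta_closed \<psi> (face f)) = 0" using face0 by simp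
  have "(\<Sum>f\<in>F. delta_closed \<psi> (face f)) + T = (\<Sum>x\<in>P. int (dc x) * dl x)"
  proof -
    have "(\<Sum>f\<in>F. delta_closed \<psi> (face f)) = (\<Sum>f\<in>F. \<Sum>x\<in>P. int (count_list (darts (face f)) x) * dl x)"
      by (rule sum.cong) (auto intro!: Wsum simp: W_def)
    also have "\<dots> = (\<Sum>x\<in>P. \<Sum>f\<in>F. int (count_list (darts (face f)) x) * dl x)"
      by (rule sum.swap)
    finally have 1: "(\<Sum>f\<in>F. delta_closed \<psi> (face f)) = (\<Sum>x\<in>P. int (\<Sum>f\<in>F. count_list (darts (face f)) x) * dl x)"
      by (simp add: sum_distrib_right)
    have "T = sum_list (map (\<lambda>B. \<Sum>x\<in>P. int (count_list (darts B) x) * dl x) Bs)"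
      unfolding T_def by (rule arg_cong[where f=sum_list], rule map_cong) (auto intro!: Wsum simp: W_def)
    also have "\<dots> = (\<Sum>x\<in>P. sum_list (map (\<lambda>B. int (count_list (darts B) x) * dl x) Bs))"
      by (rule sum_list_sum_swap)
    also have "\<dots> = (\<Sum>x\<in>P. int (sum_list (map (\<lambda>B. count_list (darts B) x) Bs)) * dl x)"
    proof (rule sum.cong)
      fix x
      show "sum_list (map (\<lambda>B. int (count_list (darts B) x) * dl x) Bs) =
          int (sum_list (map (\<lambda>B. count_list (darts B) x) Bs)) * dl x"
        by (induction Bs) (simp_all add: algebra_simps)
    qed simp
    finally have 2: "T = \<dots>" .
    show ?thesis unfolding 1 2 dc_def
      by (simp add: sum.distrib[symmetric] dart_count_def case_prod_beta algebra_simps)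
  qed
  then have Tsum: "T = (\<Sum>x\<in>P. int (dc x) * dl x)" using Fz by simp
  have dcswap: "dc x + dc (prod.swap x) = 2" if "x \<in> P" for x
    using Q that by (auto simp: dc_def P_def)
  have Psw: "prod.swap x \<in> P" if "x \<in> P" for x
    using that by (auto simp: P_def insert_commute)
  have dlsw: "dl (prod.swap x) = - dl x" if "x \<in> P" for x
    using that danti by (auto simp: P_def dl_def)
  define h1 where "h1 = (\<lambda>x. if dc x = 1 then dl x else 0)"
  define h2 where "h2 = (\<lambda>x. if dc x = 2 then (2::int) else 0)"
  have "4 dvd (\<Sum>x\<in>P. int (dc x) * dl x - (h1 x + h2 x))"
  proof (rule dvd_sum)
    fix x assume x: "x \<in> P"
    have "dc x \<le> 2" using dcswap[OF x] by simp
    then have "dc x = 0 \<or> dc x = 1 \<or> dc x = 2" by auto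
    moreover have "dl x = 1 \<or> dl x = -1" using dpm by (auto simp: dl_def case_prod_beta)
    ultimately show "4 dvd int (dc x) * dl x - (h1 x + h2 x)"
      by (auto simp: h1_def h2_def)
  qed
  then have m4: "4 dvd (T - (sum h1 P + sum h2 P))"
    by (simp add: Tsum sum_subtractf sum.distrib)
  have "sum h1 P = sum (h1 \<circ> prod.swap) P"
  proof -
    have "prod.swap ` P = P" using Psw by force
    then have "sum h1 P = sum h1 (prod.swap ` P)" by simp
    also have "\<dots> = sum (h1 \<circ> prod.swap) P" by (rule sum.reindex) (auto simp: inj_on_def)
    finally show ?thesis .
  qed
  also have "\<dots> = sum (\<lambda>x. - h1 x) P"
  proof (rule sum.cong)
    fix x assume x: "x \<in> P"
    have "dc (prod.swap x) = 1 \<longleftrightarrow> dc x = 1" using dcswap[OF x] by auto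
    then show "(h1 \<circ> prod.swap) x = - h1 x" using dlsw[OF x] by (simp add: h1_def)
  qed simp
  finally have h1z: "sum h1 P = 0" by (simp add: sum_negf)
  have Deq: "D_set E F face Bs = {x\<in>P. dc x = 2}"
    by (auto simp: D_set_def P_def dc_def)
  have h2c: "sum h2 P = 2 * int (card (D_set E F face Bs))"
  proof -
    have "sum h2 P = (\<Sum>x\<in>{x\<in>P. dc x = 2}. 2)"
      unfolding h2_def by (rule sum.inter_filter[symmetric, OF finP])
    then show ?thesis unfolding Deq by simp
  qed
  obtain t where t: "T = 3 * t" using T3 by blast
  have om: "(\<Sum>B\<leftarrow>Bs. omega \<psi> B) = of_int t"
    unfolding omega_def sum_list_div3 T_def[symmetric] t by simp
  define d where "d = int (card (D_set E F face Bs))"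
  have "4 dvd (3 * t - 2 * d)" using m4 h1z h2c t d_def by simp
  then have "\<exists>z. t - (2 * d) mod 4 = 4 * z" by presburger
  then obtain z where "t - (2 * d) mod 4 = 4 * z" by blast
  then have "(of_int t :: rat) - of_int ((2 * d) mod 4) = 4 * of_int z"
    by (metis of_int_diff of_int_mult of_int_numeral)
  then show ?thesis unfolding om p_inv_def d_def by blast
qed

end
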